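(* Consider the rested multiarmed bandit model with $K$ arms and $M$ plays per slot described in the context, and assume all arms are finite-state, irreducible, aperiodic, rested Markov chains. Then under UCB-M (with any exploration constant $L>0$) there is a constant $C_{\mathbf{S,P,r}}$ depending on the state spaces, rewards and transition probabilities of the arms but not on time, such that for all $n$ $$\Big|R(n)-\Big(n\sum_{j=1}^M \mu^{j}- \sum_{i=1}^K \mu^i E[T^i(n)]\Big)\Big| \leq C_{\mathbf{S,P,r}}.$$
   Context: Model: There are $K$ arms indexed by $i\in\{1,\dots,K\}$. Arm $i$ is a discrete-time Markov chain on a finite state space $S^i$ with transition matrix $P^i$ and stationary distribution $\pi^i=(\pi^i_x)$; each state $x\in S^i$ carries a reward $r^i_x$. The arms are mutually independent. Time is slotted; in each slot $t$ the player selects a set $A(t)$ of exactly $M$ arms ($1\le M\le K$), observes their states and collects the sum of their rewards. In the rested model, an arm's state makes one transition according to $P^i$ each time it is played and stays frozen otherwise. The mean reward of arm $i$ is $\mu^i=\sum_{x}r^i_x\pi^i_x$, with arms indexed so that $\mu^1\ge\dots\ge\mu^M>\mu^{M+1}\ge\dots\ge\mu^K$. The regret up to time $n$ is $R(n)=n\sum_{j=1}^M\mu^j-E\big[\sum_{t=1}^n\sum_{i\in A(t)} r^i_{x^i(t)}\big]$, where $x^i(t)$ is the observed state of arm $i$ in slot $t$. $T^i(n)$ denotes the total number of slots up to the end of slot $n$ in which arm $i$ is played. UCB-M with exploration constant $L>0$: in the first $K$ slots every arm is played exactly $M$ times ($M$ distinct arms per slot). For $t\ge K$, with $\bar r^i(T^i(t))$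 the sample mean of rewards from the $T^i(t)$ plays of arm $i$, compute $g^i_{t,T^i(t)}=\bar r^i(T^i(t))+\sqrt{L\ln t/T^i(t)}$ and in slot $t+1$ play the $M$ arms with the highest indices. *)

theory Defs
  imports "HOL-Probability.Probability"
begin

(* Arms are indexed 1..K, slots 1..n.  States of all arms live in a common type 's;
   arm i has finite state set S i, transition matrix P i, rewards r i. *)

primrec Pn :: "('s set) \<Rightarrow> ('s \<Rightarrow> 's \<Rightarrow> real) \<Rightarrow> nat \<Rightarrow> 's \<Rightarrow> 's \<Rightarrow> real" where
  "Pn S P 0 x y = (if x = y then 1 else 0)"
| "Pn S P (Suc n) x y = (\<Sum>z\<in>S. P x z * Pn S P n z y)"

definition stochastic :: "'s set \<Rightarrow> ('s \<Rightarrow> 's \<Rightarrow> real) \<Rightarrow> bool" where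
  "stochastic S P \<longleftrightarrow> (\<forall>x\<in>S. (\<forall>y\<in>S. P x y \<ge> 0) \<and> (\<Sum>y\<in>S. P x y) = 1)"

definition irreducible :: "'s set \<Rightarrow> ('s \<Rightarrow> 's \<Rightarrow> real) \<Rightarrow> bool" where
  "irreducible S P \<longleftrightarrow> (\<forall>x\<in>S. \<forall>y\<in>S. \<exists>n. Pn S P n x y > 0)"

definition aperiodic :: "'s set \<Rightarrow> ('s \<Rightarrow> 's \<Rightarrow> real) \<Rightarrow> bool" where
  "aperiodic S P \<longleftrightarrow> (\<forall>x\<in>S. Gcd {n. n \<ge> 1 \<and> Pn S P n x x > 0} = 1)"

definition stationary :: "'s set \<Rightarrow> ('s \<Rightarrow> 's \<Rightarrow> real) \<Rightarrow> ('s \<Rightarrow> real) \<Rightarrow> bool" where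
  "stationary S P \<pi> \<longleftrightarrow> (\<forall>x\<in>S. \<pi> x \<ge> 0) \<and> (\<Sum>x\<in>S. \<pi> x) = 1
      \<and> (\<forall>y\<in>S. (\<Sum>x\<in>S. \<pi> x * P x y) = \<pi> y)"

definition mean_reward :: "'s set \<Rightarrow> ('s \<Rightarrow> real) \<Rightarrow> ('s \<Rightarrow> real) \<Rightarrow> real" where
  "mean_reward S r \<pi> = (\<Sum>x\<in>S. r x * \<pi> x)"

(* Rested arms on a probability space: Y i k is the state of arm i observed at its
   k-th play (k = 0,1,...); it is a Markov chain with transition matrix P i
   (arbitrary initial distribution), and the arms are independent. *)
definition rested_arms ::
  "'a measure \<Rightarrow> nat \<Rightarrow> (nat \<Rightarrow> 's set) \<Rightarrow> (nat \<Rightarrow> 's \<Rightarrow> 's \<Rightarrow> real)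
   \<Rightarrow> (nat \<Rightarrow> nat \<Rightarrow> 'a \<Rightarrow> 's) \<Rightarrow> bool" where
  "rested_arms \<Omega> K S P Y \<longleftrightarrow>
     prob_space \<Omega>
   \<and> (\<forall>i\<in>{1..K}. \<forall>k. Y i k \<in> measurable \<Omega> (count_space UNIV))
   \<and> (\<forall>i\<in>{1..K}. \<forall>k. \<forall>\<omega>\<in>space \<Omega>. Y i k \<omega> \<in> S i)
   \<and> (\<forall>i\<in>{1..K}. \<forall>k (x::nat \<Rightarrow> 's) y.
        (\<forall>j\<le>k. x j \<in> S i) \<longrightarrow> y \<in> S i \<longrightarrow>
        measure \<Omega> {\<omega>\<in>space \<Omega>. (\<forall>j\<le>k. Y i j \<omega> = x j) \<and> Y i (Suc k) \<omega> = y}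
        = measure \<Omega> {\<omega>\<in>space \<Omega>. \<forall>j\<le>k. Y i j \<omega> = x j} * P i (x k) y)
   \<and> prob_space.indep_vars \<Omega> (\<lambda>_. Pi\<^sub>M UNIV (\<lambda>_. count_space UNIV))
        (\<lambda>i \<omega>. \<lambda>k. Y i k \<omega>) {1..K}"

definition valid_init :: "nat \<Rightarrow> nat \<Rightarrow> (nat \<Rightarrow> nat set) \<Rightarrow> bool" where
  "valid_init K M init \<longleftrightarrow>
     (\<forall>s\<in>{1..K}. init s \<subseteq> {1..K} \<and> card (init s) = M)
   \<and> (\<forall>i\<in>{1..K}. card {s\<in>{1..K}. i \<in> init s} = M)"

definition sample_mean :: "(nat \<Rightarrow> 's \<Rightarrow> real) \<Rightarrow> (nat \<Rightarrow> nat \<Rightarrow> 's) \<Rightarrow> nat \<Rightarrow> nat \<Rightarrow> real" where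
  "sample_mean r obs i k = (\<Sum>j<k. r i (obs i j)) / real k"

definition ucb_index :: "(nat \<Rightarrow> 's \<Rightarrow> real) \<Rightarrow> (nat \<Rightarrow> nat \<Rightarrow> 's) \<Rightarrow> real \<Rightarrow> nat
     \<Rightarrow> (nat \<Rightarrow> nat) \<Rightarrow> nat \<Rightarrow> real" where
  "ucb_index r obs L t c i = sample_mean r obs i (c i) + sqrt (L * ln (real t) / real (c i))"

definition top_M :: "nat \<Rightarrow> nat \<Rightarrow> (nat \<Rightarrow> real) \<Rightarrow> nat set" where
  "top_M K M g = {i\<in>{1..K}. card {j\<in>{1..K}. g j > g i \<or> (g j = g i \<and> j < i)} < M}"

(* set of arms played in slot s, given the play counts c at the end of slot s-1 *)
definition ucbm_choice :: "nat \<Rightarrow> nat \<Rightarrow> real \<Rightarrow> (nat \<Rightarrow> nat set) \<Rightarrow> (nat \<Rightarrow> 's \<Rightarrow> real)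
     \<Rightarrow> (nat \<Rightarrow> nat \<Rightarrow> 's) \<Rightarrow> nat \<Rightarrow> (nat \<Rightarrow> nat) \<Rightarrow> nat set" where
  "ucbm_choice K M L init r obs s c =
     (if s \<le> K then init s else top_M K M (ucb_index r obs L (s - 1) c))"

(* ucbm_count ... t i = T^i(t): number of plays of arm i in slots 1..t *)
primrec ucbm_count :: "nat \<Rightarrow> nat \<Rightarrow> real \<Rightarrow> (nat \<Rightarrow> nat set) \<Rightarrow> (nat \<Rightarrow> 's \<Rightarrow> real)
     \<Rightarrow> (nat \<Rightarrow> nat \<Rightarrow> 's) \<Rightarrow> nat \<Rightarrow> nat \<Rightarrow> nat" where
  "ucbm_count K M L init r obs 0 = (\<lambda>i. 0)"
| "ucbm_count K M L init r obs (Suc t) =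
     (\<lambda>i. ucbm_count K M L init r obs t i
          + (if i \<in> ucbm_choice K M L init r obs (Suc t) (ucbm_count K M L init r obs t) then 1 else 0))"

definition ucbm_played :: "nat \<Rightarrow> nat \<Rightarrow> real \<Rightarrow> (nat \<Rightarrow> nat set) \<Rightarrow> (nat \<Rightarrow> 's \<Rightarrow> real)
     \<Rightarrow> (nat \<Rightarrow> nat \<Rightarrow> 's) \<Rightarrow> nat \<Rightarrow> nat set" where
  "ucbm_played K M L init r obs t =
     ucbm_choice K M L init r obs t (ucbm_count K M L init r obs (t - 1))"

(* total reward collected in slots 1..n; in slot t arm i shows its state after
   T^i(t-1) transitions *)
definition ucbm_total_reward :: "nat \<Rightarrow> nat \<Rightarrow> real \<Rightarrow> (nat \<Rightarrow> nat set) \<Rightarrow> (nat \<Rightarrow> 's \<Rightarrow> real)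
     \<Rightarrow> (nat \<Rightarrow> nat \<Rightarrow> 's) \<Rightarrow> nat \<Rightarrow> real" where
  "ucbm_total_reward K M L init r obs n =
     (\<Sum>t\<in>{1..n}. \<Sum>i\<in>ucbm_played K M L init r obs t.
        r i (obs i (ucbm_count K M L init r obs (t - 1) i)))"

end

theory Submission
  imports Defs "Jordan_Normal_Form.Determinant"
begin


lemma harm_max:
  fixes S :: "'s set" and P :: "'s \<Rightarrow> 's \<Rightarrow> real" and g :: "'s \<Rightarrow> real"
  assumes fin: "finite S" and zS: "z \<in> S" and st: "stochastic S P" and irr: "irreducible S P"
    and gz: "g z = 0" and harm: "\<forall>x\<in>S-{z}. g x = (\<Sum>y\<in>S. P x y * g y)"
  shows "\<forall>x\<in>S. g x \<le> 0"
proof (rule ccontr)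
  assume "\<not> (\<forall>x\<in>S. g x \<le> 0)"
  then obtain x0 where x0: "x0 \<in> S" "g x0 > 0" by auto
  define Mx where "Mx = Max (g ` S)"
  have ge: "\<forall>y\<in>S. g y \<le> Mx" using fin Mx_def by auto
  have "Mx \<in> g ` S" unfolding Mx_def using fin x0 by (intro Max_in) auto
  then obtain x1 where x1: "x1 \<in> S" "g x1 = Mx" by auto
  have Mpos: "Mx > 0" using ge x0 by force
  have prp: "\<forall>x. x \<in> S \<longrightarrow> g x = Mx \<longrightarrow> Pn S P n x z > 0 \<longrightarrow> g z = Mx" for n
  proof (induction n)
    case 0
    then show ?case by (auto split: if_splits)
  next
    case (Suc n)
    show ?case
    proof (intro allI impI)
      fix x assume xS: "x \<in> S" and gx: "g x = Mx" and pos: "Pn S P (Suc n) x z > 0"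
      have xz: "x \<noteq> z" using gx gz Mpos by auto
      have hx: "g x = (\<Sum>y\<in>S. P x y * g y)" using harm xS xz by auto
      have Pnn: "\<forall>y\<in>S. P x y \<ge> 0" and P1: "(\<Sum>y\<in>S. P x y) = 1"
        using st xS unfolding stochastic_def by auto
      have "(\<Sum>y\<in>S. P x y * (Mx - g y)) = Mx * (\<Sum>y\<in>S. P x y) - (\<Sum>y\<in>S. P x y * g y)"
        by (simp add: algebra_simps sum_subtractf sum_distrib_left)
      also have "\<dots> = 0" using P1 hx gx by simp
      finally have s0: "(\<Sum>y\<in>S. P x y * (Mx - g y)) = 0" .
      have each: "\<forall>y\<in>S. P x y * (Mx - g y) = 0"
        using s0 fin Pnn ge by (subst (asm) sum_nonneg_eq_0_iff) auto
      have "\<exists>w\<in>S. P x w * Pn S P n w z > 0"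
      proof (rule ccontr)
        assume "\<not> ?thesis"
        then have "(\<Sum>w\<in>S. P x w * Pn S P n w z) \<le> 0" by (intro sum_nonpos) (auto simp: not_less)
        then show False using pos by simp
      qed
      then obtain w where w: "w \<in> S" "P x w * Pn S P n w z > 0" by auto
      have Pw: "P x w > 0" and Pnw: "Pn S P n w z > 0" using w Pnn
        by (auto simp: zero_less_mult_iff)
      have "g w = Mx" using each w(1) Pw by auto
      then show "g z = Mx" using Suc.IH w(1) Pnw by auto
    qed
  qed
  obtain n where "Pn S P n x1 z > 0" using irr x1 zS unfolding irreducible_def by auto
  then have "g z = Mx" using prp x1 by auto
  then show False using gz Mpos by simp
qed

lemma mat_vec_idx:
  fixes F :: "nat \<times> nat \<Rightarrow> real"
  assumes "dim_vec v = m" "a < m"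
  shows "(mat m m F *\<^sub>v v) $ a = (\<Sum>b\<in>{0..<m}. F (a,b) * v $ b)"
  using assms by (simp add: scalar_prod_def)

lemma poisson:
  fixes S :: "'s set" and P :: "'s \<Rightarrow> 's \<Rightarrow> real" and f \<pi> :: "'s \<Rightarrow> real"
  assumes fin: "finite S" and st: "stochastic S P" and irr: "irreducible S P"
    and sta: "stationary S P \<pi>" and f0: "(\<Sum>x\<in>S. \<pi> x * f x) = 0"
  shows "\<exists>h. \<forall>x\<in>S. f x = h x - (\<Sum>y\<in>S. P x y * h y)"
proof -
  have "\<exists>z\<in>S. \<pi> z > 0"
  proof (rule ccontr)
    assume "\<not> ?thesis"
    then have "\<forall>z\<in>S. \<pi> z = 0" using sta unfolding stationary_def by force
    then show False using sta unfolding stationary_def by simp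
  qed
  then obtain z where zS: "z \<in> S" and piz: "\<pi> z > 0" by auto
  define S' where "S' = S - {z}"
  define m where "m = card S'"
  have finS': "finite S'" using fin S'_def by auto
  obtain e where e: "bij_betw e {0..<m} S'" using ex_bij_betw_nat_finite[OF finS'] m_def by auto
  define ei where "ei = the_inv_into {0..<m} e"
  have ei1: "ei (e b) = b" if "b < m" for b
    using e that unfolding ei_def bij_betw_def by (auto intro: the_inv_into_f_f)
  have ei2: "e (ei y) = y" "ei y < m" if "y \<in> S'" for y
    using e that unfolding ei_def bij_betw_def
    by (auto simp: the_inv_into_f_f intro: f_the_inv_into_f)
  have eS: "e b \<in> S'" if "b < m" for b using e that unfolding bij_betw_def by auto
  have reidx: "(\<Sum>b\<in>{0..<m}. \<phi> (e b)) = (\<Sum>y\<in>S'. \<phi> y)" for \<phi> :: "'s \<Rightarrow> real"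
    using sum.reindex_bij_betw[OF e] by simp
  have splitS: "(\<Sum>y\<in>S. \<phi> y) = \<phi> z + (\<Sum>y\<in>S'. \<phi> y)" for \<phi> :: "'s \<Rightarrow> real"
    unfolding S'_def using fin zS by (simp add: sum.remove)
  define A :: "real mat" where "A = mat m m (\<lambda>(a,b). (if a = b then 1 else 0) - P (e a) (e b))"
  have Acar: "A \<in> carrier_mat m m" unfolding A_def by simp
  define ext :: "real vec \<Rightarrow> 's \<Rightarrow> real" where "ext v y = (if y \<in> S' then v $ (ei y) else 0)" for v y
  have Aidx: "(A *\<^sub>v v) $ (ei x) = ext v x - (\<Sum>y\<in>S. P x y * ext v y)"
    if "dim_vec v = m" "x \<in> S'" for v x
  proof -
    have a: "ei x < m" "e (ei x) = x" using ei2 that by auto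
    have "(A *\<^sub>v v) $ (ei x) = (\<Sum>b\<in>{0..<m}. ((if ei x = b then 1 else 0) - P x (e b)) * v $ b)"
      unfolding A_def mat_vec_idx[OF that(1) a(1)] using a by simp
    also have "\<dots> = (\<Sum>b\<in>{0..<m}. (if ei x = b then v $ b else 0)) - (\<Sum>b\<in>{0..<m}. P x (e b) * v $ b)"
      by (subst sum_subtractf[symmetric], rule sum.cong) (auto simp: algebra_simps)
    also have "(\<Sum>b\<in>{0..<m}. (if ei x = b then v $ b else 0)) = v $ (ei x)"
      using a by simp
    also have "(\<Sum>b\<in>{0..<m}. P x (e b) * v $ b) = (\<Sum>b\<in>{0..<m}. P x (e b) * ext v (e b))"
      by (rule sum.cong) (auto simp: ext_def eS ei1)
    also have "\<dots> = (\<Sum>y\<in>S'. P x y * ext v y)" by (rule reidx)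
    also have "\<dots> = (\<Sum>y\<in>S. P x y * ext v y)" using splitS[of "\<lambda>y. P x y * ext v y"]
      by (simp add: ext_def S'_def)
    finally show ?thesis using that by (simp add: ext_def)
  qed
  have "det A \<noteq> 0"
  proof
    assume "det A = 0"
    then obtain v where v: "v \<in> carrier_vec m" "v \<noteq> 0\<^sub>v m" "A *\<^sub>v v = 0\<^sub>v m"
      using det_0_iff_vec_prod_zero[OF Acar] by auto
    have dv: "dim_vec v = m" using v by auto
    have harm: "\<forall>x\<in>S-{z}. g x = (\<Sum>y\<in>S. P x y * g y)" if "g = ext v \<or> g = (\<lambda>y. - ext v y)" for g
    proof
      fix x assume x: "x \<in> S - {z}"
      then have xS': "x \<in> S'" unfolding S'_def .
      have "(A *\<^sub>v v) $ (ei x) = 0" using v ei2[OF xS'] by simp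
      then have "ext v x = (\<Sum>y\<in>S. P x y * ext v y)" using Aidx[OF dv xS'] by simp
      then show "g x = (\<Sum>y\<in>S. P x y * g y)" using that by (auto simp: sum_negf)
    qed
    have gz: "ext v z = 0" by (simp add: ext_def S'_def)
    have le: "\<forall>x\<in>S. ext v x \<le> 0" using harm_max[OF fin zS st irr, of "ext v"] harm gz by auto
    have hn: "\<forall>x\<in>S-{z}. (\<lambda>y. - ext v y) x = (\<Sum>y\<in>S. P x y * (\<lambda>y. - ext v y) y)"
      by (rule harm) simp
    have ge: "\<forall>x\<in>S. - ext v x \<le> 0"
      using harm_max[OF fin zS st irr, of "\<lambda>y. - ext v y", OF _ hn] gz by simp
    have "v = 0\<^sub>v m"
    proof (rule eq_vecI)
      fix b assume "b < dim_vec (0\<^sub>v m)"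
      then have b: "b < m" by simp
      have "ext v (e b) = 0" using le ge eS[OF b] S'_def by force
      then show "v $ b = 0\<^sub>v m $ b" using b eS[OF b] ei1[OF b] by (simp add: ext_def)
    qed (simp add: dv)
    then show False using v by simp
  qed
  then have "A \<in> Units (ring_mat TYPE(real) m ())" by (rule det_non_zero_imp_unit[OF Acar])
  then obtain B where B: "B \<in> carrier_mat m m" "A * B = 1\<^sub>m m"
    unfolding Units_def ring_mat_def by auto
  define fv where "fv = vec m (\<lambda>a. f (e a))"
  define xv where "xv = B *\<^sub>v fv"
  have dxv: "dim_vec xv = m" using B unfolding xv_def by simp
  have Axv: "A *\<^sub>v xv = fv" unfolding xv_def
    using assoc_mult_mat_vec[OF Acar B(1), of fv] B(2) by (simp add: fv_def)
  define h where "h = ext xv"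
  have onS': "f x = h x - (\<Sum>y\<in>S. P x y * h y)" if "x \<in> S'" for x
  proof -
    have "f x = fv $ (ei x)" using ei2[OF that] by (simp add: fv_def)
    also have "\<dots> = (A *\<^sub>v xv) $ (ei x)" using Axv by simp
    finally show ?thesis using Aidx[OF dxv that] h_def by simp
  qed
  have piP: "(\<Sum>x\<in>S. \<pi> x * P x y) = \<pi> y" if "y \<in> S" for y
    using sta that unfolding stationary_def by auto
  have "(\<Sum>x\<in>S. \<pi> x * (h x - (\<Sum>y\<in>S. P x y * h y))) =
        (\<Sum>x\<in>S. \<pi> x * h x) - (\<Sum>x\<in>S. \<Sum>y\<in>S. \<pi> x * P x y * h y)"
    by (simp add: algebra_simps sum_subtractf sum_distrib_left)
  also have "(\<Sum>x\<in>S. \<Sum>y\<in>S. \<pi> x * P x y * h y) = (\<Sum>y\<in>S. (\<Sum>x\<in>S. \<pi> x * P x y) * h y)"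
    by (subst sum.swap) (simp add: sum_distrib_right)
  also have "\<dots> = (\<Sum>y\<in>S. \<pi> y * h y)" by (rule sum.cong) (auto simp: piP)
  finally have tot: "(\<Sum>x\<in>S. \<pi> x * (h x - (\<Sum>y\<in>S. P x y * h y))) = 0" by simp
  have e1: "(\<Sum>x\<in>S'. \<pi> x * (h x - (\<Sum>y\<in>S. P x y * h y))) = (\<Sum>x\<in>S'. \<pi> x * f x)"
    by (rule sum.cong) (auto simp: onS')
  have a1: "\<pi> z * (h z - (\<Sum>y\<in>S. P z y * h y)) + (\<Sum>x\<in>S'. \<pi> x * f x) = 0"
    using tot splitS[of "\<lambda>x. \<pi> x * (h x - (\<Sum>y\<in>S. P x y * h y))"] e1 by simp
  have a2: "\<pi> z * f z + (\<Sum>x\<in>S'. \<pi> x * f x) = 0"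
    using f0 splitS[of "\<lambda>x. \<pi> x * f x"] by simp
  have "\<pi> z * (h z - (\<Sum>y\<in>S. P z y * h y)) = \<pi> z * f z"
    using a1 a2 by linarith
  then have onz: "f z = h z - (\<Sum>y\<in>S. P z y * h y)" using piz by simp
  show ?thesis
  proof (intro exI ballI)
    fix x assume "x \<in> S"
    then show "f x = h x - (\<Sum>y\<in>S. P x y * h y)"
      using onz onS' S'_def by (cases "x = z") auto
  qed
qed



lemma cnt_le: "ucbm_count K M L init r obs t i \<le> t"
  by (induction t) auto

lemma cnt_step: "ucbm_count K M L init r obs t i \<le> ucbm_count K M L init r obs (Suc t) i"
  by simp

lemma cnt_mono: "t \<le> t' \<Longrightarrow> ucbm_count K M L init r obs t i \<le> ucbm_count K M L init r obs t' i"
  by (induction t' rule: dec_induct) (auto intro: le_trans[OF _ cnt_step])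

lemma top_M_sub: "top_M K M g \<subseteq> {1..K}" unfolding top_M_def by auto

lemma choice_sub:
  assumes "valid_init K M init" "1 \<le> s"
  shows "ucbm_choice K M L init r obs s c \<subseteq> {1..K}"
  using assms top_M_sub unfolding ucbm_choice_def valid_init_def by auto

lemma top_M_cong: "(\<And>j. j \<in> {1..K} \<Longrightarrow> g j = g' j) \<Longrightarrow> top_M K M g = top_M K M g'"
proof -
  assume a: "\<And>j. j \<in> {1..K} \<Longrightarrow> g j = g' j"
  have "\<And>i. i \<in> {1..K} \<Longrightarrow> {j\<in>{1..K}. g j > g i \<or> (g j = g i \<and> j < i)} = {j\<in>{1..K}. g' j > g' i \<or> (g' j = g' i \<and> j < i)}"
    using a by auto
  then show ?thesis unfolding top_M_def by auto
qed

lemma reward_eq: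
  assumes vi: "valid_init K M init"
  shows "ucbm_total_reward K M L init r obs n =
    (\<Sum>i\<in>{1..K}. \<Sum>k<ucbm_count K M L init r obs n i. r i (obs i k))"
proof (induction n)
  case 0
  then show ?case by (simp add: ucbm_total_reward_def)
next
  case (Suc n)
  let ?c = "ucbm_count K M L init r obs"
  let ?A = "ucbm_choice K M L init r obs (Suc n) (?c n)"
  have sub: "?A \<subseteq> {1..K}" by (rule choice_sub[OF vi]) simp
  have "ucbm_total_reward K M L init r obs (Suc n) = ucbm_total_reward K M L init r obs n
        + (\<Sum>i\<in>?A. r i (obs i (?c n i)))"
    unfolding ucbm_total_reward_def ucbm_played_def by (simp add: add.commute)
  also have "(\<Sum>i\<in>?A. r i (obs i (?c n i))) = (\<Sum>i\<in>{1..K}. if i \<in> ?A then r i (obs i (?c n i)) else 0)"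
    using sub by (simp add: sum.inter_restrict[symmetric] Int_absorb1 Int_commute)
  also have "ucbm_total_reward K M L init r obs n + \<dots> =
     (\<Sum>i\<in>{1..K}. (\<Sum>k<?c n i. r i (obs i k)) + (if i \<in> ?A then r i (obs i (?c n i)) else 0))"
    using Suc by (simp add: sum.distrib)
  also have "\<dots> = (\<Sum>i\<in>{1..K}. \<Sum>k<?c (Suc n) i. r i (obs i k))"
    by (rule sum.cong) auto
  finally show ?case .
qed

lemma cnt_invariant:
  assumes agree: "\<forall>j\<in>{1..K}. \<forall>m<b j. obs' j m = obs j m"
    and bi: "k \<le> b i" and bj: "\<forall>j\<in>{1..K}. j \<noteq> i \<longrightarrow> t \<le> b j"
    and le: "ucbm_count K M L init r obs t i \<le> k"
  shows "ucbm_count K M L init r obs' t = ucbm_count K M L init r obs t"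
  using bj le
proof (induction t)
  case 0
  then show ?case by simp
next
  case (Suc t)
  let ?c = "ucbm_count K M L init r obs"
  have le': "?c t i \<le> k" using Suc.prems(2) cnt_step[of K M L init r obs t i] by linarith
  have bt: "\<forall>j\<in>{1..K}. j \<noteq> i \<longrightarrow> t \<le> b j" using Suc.prems(1) by force
  have IH: "ucbm_count K M L init r obs' t = ?c t" using Suc.IH bt le' by blast
  have ucb: "ucb_index r obs' L t (?c t) j = ucb_index r obs L t (?c t) j" if j: "j \<in> {1..K}" for j
  proof -
    have "?c t j \<le> b j"
    proof (cases "j = i")
      case True then show ?thesis using le' bi by simp
    next
      case False then have "Suc t \<le> b j" using Suc.prems(1) j by auto
      then show ?thesis using cnt_le[of K M L init r obs t j] by simp
    qed
    then have "\<forall>m<?c t j. obs' j m = obs j m" using agree j by auto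
    then show ?thesis unfolding ucb_index_def sample_mean_def by simp
  qed
  have ch: "ucbm_choice K M L init r obs' (Suc t) (?c t) = ucbm_choice K M L init r obs (Suc t) (?c t)"
    unfolding ucbm_choice_def using top_M_cong[of K "ucb_index r obs' L t (?c t)" "ucb_index r obs L t (?c t)" M] ucb
    by simp
  show ?case using IH ch by simp
qed



lemma fin_integral:
  fixes W :: "'a \<Rightarrow> 'b" and G :: "'b \<Rightarrow> real" and F :: "'a \<Rightarrow> real"
  assumes ps: "prob_space M" and fR: "finite R" and WR: "\<forall>\<omega>\<in>space M. W \<omega> \<in> R"
    and fib: "\<forall>v\<in>R. {\<omega>\<in>space M. W \<omega> = v} \<in> sets M"
    and FG: "\<forall>\<omega>\<in>space M. F \<omega> = G (W \<omega>)"
  shows "integrable M F \<and> integral\<^sup>L M F = (\<Sum>v\<in>R. G v * measure M {\<omega>\<in>space M. W \<omega> = v})"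
proof -
  interpret prob_space M by (rule ps)
  define F' where "F' = (\<lambda>\<omega>. \<Sum>v\<in>R. G v * indicator {\<omega>\<in>space M. W \<omega> = v} \<omega>)"
  have eq: "F \<omega> = F' \<omega>" if "\<omega> \<in> space M" for \<omega>
  proof -
    have "F' \<omega> = (\<Sum>v\<in>R. if v = W \<omega> then G v else 0)"
      unfolding F'_def by (rule sum.cong) (auto simp: indicator_def that)
    also have "\<dots> = G (W \<omega>)" using WR that fR by simp
    finally show ?thesis using FG that by simp
  qed
  have ind: "integrable M (indicator {\<omega>\<in>space M. W \<omega> = v} :: 'a \<Rightarrow> real)" if "v \<in> R" for v
  proof -
    have s: "{\<omega>\<in>space M. W \<omega> = v} \<in> sets M" using fib that by auto
    show ?thesis by (rule integrable_real_indicator[OF s]) (simp add: less_top[symmetric])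
  qed
  have ii: "integrable M (\<lambda>\<omega>. G v * indicator {\<omega>\<in>space M. W \<omega> = v} \<omega>)" if "v \<in> R" for v
    using ind[OF that] by (rule integrable_mult_right)
  have iF': "integrable M F'" unfolding F'_def by (rule Bochner_Integration.integrable_sum) (rule ii)
  have "integrable M F \<longleftrightarrow> integrable M F'" by (rule Bochner_Integration.integrable_cong) (auto simp: eq)
  then have "integrable M F" using iF' by simp
  moreover have "integral\<^sup>L M F = integral\<^sup>L M F'" using eq by (intro Bochner_Integration.integral_cong) auto
  moreover have "integral\<^sup>L M F' = (\<Sum>v\<in>R. G v * measure M {\<omega>\<in>space M. W \<omega> = v})"
    unfolding F'_def using fib
    using fib by (subst Bochner_Integration.integral_sum) (auto intro: ii ind intro!: sum.cong simp: Int_absorb2 sets.sets_into_space)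
  ultimately show ?thesis by simp
qed

lemma bounded_exp:
  fixes F :: "'a \<Rightarrow> real"
  assumes ps: "prob_space M" and iF: "integrable M F" and b: "\<forall>\<omega>\<in>space M. \<bar>F \<omega>\<bar> \<le> B"
  shows "\<bar>integral\<^sup>L M F\<bar> \<le> B"
proof -
  interpret prob_space M by (rule ps)
  have "integral\<^sup>L M F \<le> B" using b by (intro integral_le_const[OF iF] AE_I2) auto
  moreover have "integral\<^sup>L M (\<lambda>\<omega>. - F \<omega>) \<le> B" using b iF by (intro integral_le_const AE_I2) auto
  ultimately show ?thesis by simp
qed

definition trunc :: "nat \<Rightarrow> (nat \<Rightarrow> nat) \<Rightarrow> (nat \<Rightarrow> nat \<Rightarrow> 'a \<Rightarrow> 's) \<Rightarrow> 'a \<Rightarrow> nat \<Rightarrow> nat \<Rightarrow> 's" where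
  "trunc K b Y \<omega> = restrict (\<lambda>j. restrict (\<lambda>m. Y j m \<omega>) {..<b j}) {1..K}"

definition TR :: "nat \<Rightarrow> (nat \<Rightarrow> nat) \<Rightarrow> (nat \<Rightarrow> 's set) \<Rightarrow> (nat \<Rightarrow> nat \<Rightarrow> 's) set" where
  "TR K b S = PiE {1..K} (\<lambda>j. PiE {..<b j} (\<lambda>m. S j))"

lemma TR_finite: "\<forall>i\<in>{1..K}. finite (S i) \<Longrightarrow> finite (TR K b S)"
  unfolding TR_def by (intro finite_PiE) auto

lemma trunc_in: "rested_arms \<Omega> K S P Y \<Longrightarrow> \<omega> \<in> space \<Omega> \<Longrightarrow> trunc K b Y \<omega> \<in> TR K b S"
  unfolding trunc_def TR_def rested_arms_def by auto

lemma trunc_eq_iff: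
  assumes "v \<in> TR K b S"
  shows "trunc K b Y \<omega> = v \<longleftrightarrow> (\<forall>j\<in>{1..K}. \<forall>m<b j. Y j m \<omega> = v j m)"
proof
  assume "trunc K b Y \<omega> = v" then show "\<forall>j\<in>{1..K}. \<forall>m<b j. Y j m \<omega> = v j m"
    unfolding trunc_def by auto
next
  assume a: "\<forall>j\<in>{1..K}. \<forall>m<b j. Y j m \<omega> = v j m"
  show "trunc K b Y \<omega> = v" unfolding trunc_def
  proof (rule ext)
    fix j
    show "(\<lambda>j\<in>{1..K}. \<lambda>m\<in>{..<b j}. Y j m \<omega>) j = v j"
    proof (cases "j \<in> {1..K}")
      case True
      have vj: "v j \<in> PiE {..<b j} (\<lambda>m. S j)" using assms True unfolding TR_def by auto
      show ?thesis
      proof (rule ext)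
        fix m
        have ext: "v j \<in> extensional {..<b j}" using vj by (simp add: PiE_def)
        show "(\<lambda>j\<in>{1..K}. \<lambda>m\<in>{..<b j}. Y j m \<omega>) j m = v j m"
        proof (cases "m < b j")
          case True then show ?thesis using \<open>j \<in> {1..K}\<close> a by simp
        next
          case False then show ?thesis using \<open>j \<in> {1..K}\<close> extensional_arb[OF ext, of m] by simp
        qed
      qed
    next
      case False
      have ext: "v \<in> extensional {1..K}" using assms unfolding TR_def by (simp add: PiE_def)
      show ?thesis using False extensional_arb[OF ext, of j] by auto
    qed
  qed
qed

lemma Y_meas: "rested_arms \<Omega> K S P Y \<Longrightarrow> j \<in> {1..K} \<Longrightarrow> {\<omega>\<in>space \<Omega>. Y j m \<omega> = c} \<in> sets \<Omega>"
proof -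
  assume ra: "rested_arms \<Omega> K S P Y" and j: "j \<in> {1..K}"
  have "Y j m \<in> measurable \<Omega> (count_space UNIV)" using ra j unfolding rested_arms_def by auto
  from measurable_sets[OF this, of "{c}"] show ?thesis by (simp add: vimage_def Int_def conj_commute)
qed

lemma trunc_fib:
  assumes ra: "rested_arms \<Omega> K S P Y" and v: "v \<in> TR K b S"
  shows "{\<omega>\<in>space \<Omega>. trunc K b Y \<omega> = v} \<in> sets \<Omega>"
proof -
  have "{\<omega>\<in>space \<Omega>. trunc K b Y \<omega> = v} = {\<omega>\<in>space \<Omega>. \<forall>j\<in>{1..K}. \<forall>m\<in>{..<b j}. Y j m \<omega> = v j m}"
    using trunc_eq_iff[OF v, of Y] by auto
  also have "\<dots> \<in> sets \<Omega>"
    by (intro sets.sets_Collect_finite_All Y_meas[OF ra]) auto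
  finally show ?thesis .
qed

lemma trunc_integral:
  fixes G :: "(nat \<Rightarrow> nat \<Rightarrow> 's) \<Rightarrow> real" and F :: "'a \<Rightarrow> real"
  assumes ra: "rested_arms \<Omega> K S P Y" and fS: "\<forall>i\<in>{1..K}. finite (S i)"
    and FG: "\<forall>\<omega>\<in>space \<Omega>. F \<omega> = G (trunc K b Y \<omega>)"
  shows "integrable \<Omega> F \<and> integral\<^sup>L \<Omega> F = (\<Sum>v\<in>TR K b S. G v * measure \<Omega> {\<omega>\<in>space \<Omega>. trunc K b Y \<omega> = v})"
  using ra fS FG
  by (intro fin_integral) (auto simp: rested_arms_def TR_finite trunc_in trunc_fib)

lemma PM_sets:
  "{f :: nat \<Rightarrow> 's. (\<forall>m<b. f m = c m) \<and> (Q \<longrightarrow> f d = e)} \<in> sets (Pi\<^sub>M UNIV (\<lambda>_. count_space UNIV))"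
proof -
  let ?PM = "Pi\<^sub>M UNIV (\<lambda>_. count_space (UNIV :: 's set))"
  have sp: "space ?PM = UNIV" by (simp add: space_PiM)
  have one: "{f \<in> space ?PM. f m = c'} \<in> sets ?PM" for m c'
  proof -
    have "(\<lambda>f. f m) \<in> measurable ?PM (count_space UNIV)"
      using measurable_component_singleton[of m UNIV "\<lambda>_. count_space (UNIV :: 's set)"] by simp
    from measurable_sets[OF this, of "{c'}"] show ?thesis by (simp add: vimage_def Int_def conj_commute)
  qed
  have "{f \<in> space ?PM. \<forall>m\<in>{..<b}. f m = c m} \<in> sets ?PM"
    by (intro sets.sets_Collect_finite_All one) auto
  moreover have "{f \<in> space ?PM. Q \<longrightarrow> f d = e} \<in> sets ?PM"
  proof (cases Q)
    case True then show ?thesis using one by simp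
  next
    case False then show ?thesis by simp
  qed
  ultimately have "{f \<in> space ?PM. \<forall>m\<in>{..<b}. f m = c m} \<inter> {f \<in> space ?PM. Q \<longrightarrow> f d = e} \<in> sets ?PM"
    by auto
  moreover have "{f \<in> space ?PM. \<forall>m\<in>{..<b}. f m = c m} \<inter> {f \<in> space ?PM. Q \<longrightarrow> f d = e}
      = {f. (\<forall>m<b. f m = c m) \<and> (Q \<longrightarrow> f d = e)}" using sp by auto
  ultimately show ?thesis by simp
qed

lemma markov_enl:
  assumes ra: "rested_arms \<Omega> K S P Y" and i: "i \<in> {1..K}" and bi: "b i = Suc k"
    and v: "v \<in> TR K b S" and y: "y \<in> S i"
  shows "measure \<Omega> {\<omega>\<in>space \<Omega>. trunc K b Y \<omega> = v \<and> Y i (Suc k) \<omega> = y}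
       = measure \<Omega> {\<omega>\<in>space \<Omega>. trunc K b Y \<omega> = v} * P i (v i k) y"
proof -
  interpret prob_space \<Omega> using ra unfolding rested_arms_def by auto
  define X where "X = (\<lambda>j \<omega>. \<lambda>m. Y j m \<omega>)"
  define A where "A = (\<lambda>j. {f. (\<forall>m<b j. f m = v j m) \<and> (False \<longrightarrow> f 0 = y)})"
  define A' where "A' = (\<lambda>j. {f. (\<forall>m<b j. f m = v j m) \<and> (j = i \<longrightarrow> f (Suc k) = y)})"
  have ind: "indep_vars (\<lambda>_. Pi\<^sub>M UNIV (\<lambda>_. count_space UNIV)) X {1..K}"
    using ra unfolding rested_arms_def X_def by auto
  have sA: "A j \<in> sets (Pi\<^sub>M UNIV (\<lambda>_. count_space UNIV))" for j unfolding A_def by (rule PM_sets)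
  have sA': "A' j \<in> sets (Pi\<^sub>M UNIV (\<lambda>_. count_space UNIV))" for j unfolding A'_def by (rule PM_sets)
  have ne: "{1..K} \<noteq> {}" using i by auto
  have E1: "{\<omega>\<in>space \<Omega>. trunc K b Y \<omega> = v \<and> Y i (Suc k) \<omega> = y} = (\<Inter>j\<in>{1..K}. X j -` A' j \<inter> space \<Omega>)"
    using trunc_eq_iff[OF v, of Y] i ne unfolding X_def A'_def by auto
  have E0: "{\<omega>\<in>space \<Omega>. trunc K b Y \<omega> = v} = (\<Inter>j\<in>{1..K}. X j -` A j \<inter> space \<Omega>)"
    using trunc_eq_iff[OF v, of Y] i ne unfolding X_def A_def by auto
  have p1: "prob (\<Inter>j\<in>{1..K}. X j -` A' j \<inter> space \<Omega>) = (\<Prod>j\<in>{1..K}. prob (X j -` A' j \<inter> space \<Omega>))"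
    by (rule indep_varsD_finite[OF ind ne]) (auto intro: sA')
  have p0: "prob (\<Inter>j\<in>{1..K}. X j -` A j \<inter> space \<Omega>) = (\<Prod>j\<in>{1..K}. prob (X j -` A j \<inter> space \<Omega>))"
    by (rule indep_varsD_finite[OF ind ne]) (auto intro: sA)
  have AA: "A' j = A j" if "j \<noteq> i" for j using that unfolding A_def A'_def by auto
  have r1: "(\<Prod>j\<in>{1..K}. prob (X j -` A' j \<inter> space \<Omega>)) =
      prob (X i -` A' i \<inter> space \<Omega>) * (\<Prod>j\<in>{1..K}-{i}. prob (X j -` A j \<inter> space \<Omega>))"
    using i by (simp add: prod.remove AA)
  have r0: "(\<Prod>j\<in>{1..K}. prob (X j -` A j \<inter> space \<Omega>)) =
      prob (X i -` A i \<inter> space \<Omega>) * (\<Prod>j\<in>{1..K}-{i}. prob (X j -` A j \<inter> space \<Omega>))"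
    using i by (simp add: prod.remove)
  have mk: "\<forall>kk x yy. (\<forall>j\<le>kk. x j \<in> S i) \<longrightarrow> yy \<in> S i \<longrightarrow>
        measure \<Omega> {\<omega>\<in>space \<Omega>. (\<forall>j\<le>kk. Y i j \<omega> = x j) \<and> Y i (Suc kk) \<omega> = yy}
        = measure \<Omega> {\<omega>\<in>space \<Omega>. \<forall>j\<le>kk. Y i j \<omega> = x j} * P i (x kk) yy"
    using ra i unfolding rested_arms_def by blast
  have vS: "\<forall>j\<le>k. v i j \<in> S i" using v i bi unfolding TR_def by (auto simp: PiE_iff)
  have "X i -` A' i \<inter> space \<Omega> = {\<omega>\<in>space \<Omega>. (\<forall>j\<le>k. Y i j \<omega> = v i j) \<and> Y i (Suc k) \<omega> = y}"
    unfolding X_def A'_def using bi by (auto simp: less_Suc_eq_le)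
  moreover have "X i -` A i \<inter> space \<Omega> = {\<omega>\<in>space \<Omega>. \<forall>j\<le>k. Y i j \<omega> = v i j}"
    unfolding X_def A_def using bi by (auto simp: less_Suc_eq_le)
  ultimately have pi: "prob (X i -` A' i \<inter> space \<Omega>) = prob (X i -` A i \<inter> space \<Omega>) * P i (v i k) y"
    using mk vS y by simp
  show ?thesis unfolding E1 E0 p1 p0 r1 r0 pi by simp
qed

lemma trunc_agree: "\<forall>j\<in>{1..K}. \<forall>m<b j. trunc K b Y \<omega> j m = Y j m \<omega>"
  unfolding trunc_def by auto

lemma zero_term:
  fixes h :: "'s \<Rightarrow> real" and Y :: "nat \<Rightarrow> nat \<Rightarrow> 'a \<Rightarrow> 's"
  assumes ra: "rested_arms \<Omega> K S P Y" and fS: "\<forall>j\<in>{1..K}. finite (S j)" and i: "i \<in> {1..K}"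
    and st: "stochastic (S i) (P i)" and kn: "k < n"
  shows "integrable \<Omega> (\<lambda>\<omega>. if k < ucbm_count K M L init r (\<lambda>j m. Y j m \<omega>) n i
             then h (Y i (Suc k) \<omega>) - (\<Sum>y\<in>S i. P i (Y i k \<omega>) y * h y) else 0) \<and>
         integral\<^sup>L \<Omega> (\<lambda>\<omega>. if k < ucbm_count K M L init r (\<lambda>j m. Y j m \<omega>) n i
             then h (Y i (Suc k) \<omega>) - (\<Sum>y\<in>S i. P i (Y i k \<omega>) y * h y) else 0) = 0"
proof -
  interpret prob_space \<Omega> using ra unfolding rested_arms_def by auto
  define b where "b = (\<lambda>j. if j = i then Suc k else Suc n)"
  let ?cnt = "ucbm_count K M L init r"
  define G where "G = (\<lambda>(v, y). if k < ?cnt v n i then h y - (\<Sum>y'\<in>S i. P i (v i k) y' * h y') else (0::real))"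
  define W where "W = (\<lambda>\<omega>. (trunc K b Y \<omega>, Y i (Suc k) \<omega>))"
  have cond: "(k < ?cnt (\<lambda>j m. Y j m \<omega>) n i) = (k < ?cnt (trunc K b Y \<omega>) n i)" for \<omega>
  proof -
    have ag1: "\<forall>j\<in>{1..K}. \<forall>m<b j. trunc K b Y \<omega> j m = (\<lambda>j m. Y j m \<omega>) j m" using trunc_agree by simp
    have ag2: "\<forall>j\<in>{1..K}. \<forall>m<b j. (\<lambda>j m. Y j m \<omega>) j m = trunc K b Y \<omega> j m" using trunc_agree[of K b Y \<omega>] by simp
    have bb: "k \<le> b i" "\<forall>j\<in>{1..K}. j \<noteq> i \<longrightarrow> n \<le> b j" unfolding b_def by auto
    show ?thesis
      using cnt_invariant[OF ag1 bb(1) bb(2), of M L init r] cnt_invariant[OF ag2 bb(1) bb(2), of M L init r]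
      by (metis not_less)
  qed
  have FG: "\<forall>\<omega>\<in>space \<Omega>. (if k < ?cnt (\<lambda>j m. Y j m \<omega>) n i
             then h (Y i (Suc k) \<omega>) - (\<Sum>y\<in>S i. P i (Y i k \<omega>) y * h y) else 0) = G (W \<omega>)"
  proof
    fix \<omega> assume "\<omega> \<in> space \<Omega>"
    have "trunc K b Y \<omega> i k = Y i k \<omega>" using trunc_agree[of K b Y \<omega>] i unfolding b_def by auto
    then show "(if k < ?cnt (\<lambda>j m. Y j m \<omega>) n i
             then h (Y i (Suc k) \<omega>) - (\<Sum>y\<in>S i. P i (Y i k \<omega>) y * h y) else 0) = G (W \<omega>)"
      unfolding G_def W_def using cond[of \<omega>] by simp
  qed
  have fR: "finite (TR K b S \<times> S i)" using TR_finite[OF fS] fS i by auto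
  have WR: "\<forall>\<omega>\<in>space \<Omega>. W \<omega> \<in> TR K b S \<times> S i"
    using trunc_in[OF ra] ra i unfolding W_def rested_arms_def by auto
  have fibeq: "{\<omega>\<in>space \<Omega>. W \<omega> = (v,y)} = {\<omega>\<in>space \<Omega>. trunc K b Y \<omega> = v} \<inter> {\<omega>\<in>space \<Omega>. Y i (Suc k) \<omega> = y}" for v y
    unfolding W_def by auto
  have fib: "\<forall>vy\<in>TR K b S \<times> S i. {\<omega>\<in>space \<Omega>. W \<omega> = vy} \<in> sets \<Omega>"
    using trunc_fib[OF ra] Y_meas[OF ra i] fibeq by auto
  note FI = fin_integral[OF prob_space_axioms fR WR fib FG]
  have "(\<Sum>vy\<in>TR K b S \<times> S i. G vy * measure \<Omega> {\<omega>\<in>space \<Omega>. W \<omega> = vy}) =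
        (\<Sum>v\<in>TR K b S. \<Sum>y\<in>S i. G (v,y) * measure \<Omega> {\<omega>\<in>space \<Omega>. W \<omega> = (v,y)})"
    by (simp add: sum.cartesian_product)
  also have "\<dots> = (\<Sum>v\<in>TR K b S. 0)"
  proof (rule sum.cong[OF refl])
    fix v assume v: "v \<in> TR K b S"
    have vik: "v i k \<in> S i" using v i unfolding TR_def b_def by (auto simp: PiE_iff)
    have Pr: "(\<Sum>y\<in>S i. P i (v i k) y) = 1" using st vik unfolding stochastic_def by auto
    let ?m = "measure \<Omega> {\<omega>\<in>space \<Omega>. trunc K b Y \<omega> = v}"
    let ?Ph = "\<Sum>y'\<in>S i. P i (v i k) y' * h y'"
    have "(\<Sum>y\<in>S i. G (v,y) * measure \<Omega> {\<omega>\<in>space \<Omega>. W \<omega> = (v,y)}) =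
          (\<Sum>y\<in>S i. G (v,y) * (?m * P i (v i k) y))"
    proof (rule sum.cong[OF refl])
      fix y assume y: "y \<in> S i"
      have "{\<omega>\<in>space \<Omega>. W \<omega> = (v,y)} = {\<omega>\<in>space \<Omega>. trunc K b Y \<omega> = v \<and> Y i (Suc k) \<omega> = y}"
        unfolding W_def by auto
      then show "G (v,y) * measure \<Omega> {\<omega>\<in>space \<Omega>. W \<omega> = (v,y)} = G (v,y) * (?m * P i (v i k) y)"
        using markov_enl[OF ra i _ v y, of k] unfolding b_def by simp
    qed
    also have "\<dots> = 0"
    proof (cases "k < ?cnt v n i")
      case True
      define c where "c = ?Ph"
      have "(\<Sum>y\<in>S i. G (v,y) * (?m * P i (v i k) y)) = (\<Sum>y\<in>S i. ?m * (P i (v i k) y * h y) - (?m * c) * P i (v i k) y)"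
        by (rule sum.cong) (simp_all add: G_def True c_def algebra_simps)
      also have "\<dots> = ?m * c - (?m * c) * (\<Sum>y\<in>S i. P i (v i k) y)"
        by (simp only: sum_subtractf sum_distrib_left[symmetric] c_def)
      also have "\<dots> = 0" using Pr by simp
      finally show ?thesis .
    next
      case False
      then show ?thesis by (simp add: G_def)
    qed
    finally show "(\<Sum>y\<in>S i. G (v,y) * measure \<Omega> {\<omega>\<in>space \<Omega>. W \<omega> = (v,y)}) = 0" .
  qed
  finally show ?thesis using FI by simp
qed



lemma cnt_full:
  "ucbm_count K M L init r (trunc K (\<lambda>_. Suc n) Y \<omega>) n = ucbm_count K M L init r (\<lambda>j m. Y j m \<omega>) n"
proof -
  have ag: "\<forall>j\<in>{1..K}. \<forall>m<(\<lambda>_. Suc n) j. trunc K (\<lambda>_. Suc n) Y \<omega> j m = (\<lambda>j m. Y j m \<omega>) j m"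
    using trunc_agree[of K "\<lambda>_. Suc n" Y \<omega>] by simp
  show ?thesis by (rule cnt_invariant[OF ag, of n 0 n]) (auto simp: cnt_le)
qed

lemma arm_bound:
  fixes H :: "'s \<Rightarrow> real" and Y :: "nat \<Rightarrow> nat \<Rightarrow> 'a \<Rightarrow> 's"
  assumes ra: "rested_arms \<Omega> K S P Y" and fS: "\<forall>j\<in>{1..K}. finite (S j)" and i: "i \<in> {1..K}"
    and st: "stochastic (S i) (P i)"
    and pois: "\<forall>x\<in>S i. r i x - mu = H x - (\<Sum>y\<in>S i. P i x y * H y)"
  shows "integrable \<Omega> (\<lambda>\<omega>. \<Sum>k<ucbm_count K M L init r (\<lambda>j m. Y j m \<omega>) n i. r i (Y i k \<omega>))
    \<and> integrable \<Omega> (\<lambda>\<omega>. real (ucbm_count K M L init r (\<lambda>j m. Y j m \<omega>) n i))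
    \<and> \<bar>integral\<^sup>L \<Omega> (\<lambda>\<omega>. \<Sum>k<ucbm_count K M L init r (\<lambda>j m. Y j m \<omega>) n i. r i (Y i k \<omega>))
       - mu * integral\<^sup>L \<Omega> (\<lambda>\<omega>. real (ucbm_count K M L init r (\<lambda>j m. Y j m \<omega>) n i))\<bar>
      \<le> 2 * (\<Sum>x\<in>S i. \<bar>H x\<bar>)"
proof -
  interpret prob_space \<Omega> using ra unfolding rested_arms_def by auto
  let ?cnt = "ucbm_count K M L init r"
  let ?N = "\<lambda>\<omega>. ?cnt (\<lambda>j m. Y j m \<omega>) n i"
  let ?T = "trunc K (\<lambda>_. Suc n) Y"
  define B where "B = (\<Sum>x\<in>S i. \<bar>H x\<bar>)"
  have YS: "Y i k \<omega> \<in> S i" if "\<omega> \<in> space \<Omega>" for k \<omega> using ra i that unfolding rested_arms_def by auto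
  have Nle: "?N \<omega> \<le> n" for \<omega> by (rule cnt_le)
  have Tik: "?T \<omega> i k = Y i k \<omega>" if "k \<le> n" for k \<omega> using trunc_agree[of K "\<lambda>_. Suc n" Y \<omega>] i that by auto
  have NT: "?N \<omega> = ?cnt (?T \<omega>) n i" for \<omega> using cnt_full[of K M L init r n Y \<omega>] by simp
  have iR: "integrable \<Omega> (\<lambda>\<omega>. \<Sum>k<?N \<omega>. r i (Y i k \<omega>))"
  proof -
    have "\<forall>\<omega>\<in>space \<Omega>. (\<Sum>k<?N \<omega>. r i (Y i k \<omega>)) = (\<lambda>v. \<Sum>k<?cnt v n i. r i (v i k)) (?T \<omega>)"
    proof
      fix \<omega> assume "\<omega> \<in> space \<Omega>"
      have "(\<Sum>k<?N \<omega>. r i (Y i k \<omega>)) = (\<Sum>k<?N \<omega>. r i (?T \<omega> i k))"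
      proof (rule sum.cong[OF refl])
        fix k assume "k \<in> {..<?N \<omega>}"
        then have "k \<le> n" using Nle[of \<omega>] by auto
        then show "r i (Y i k \<omega>) = r i (?T \<omega> i k)" using Tik by simp
      qed
      then show "(\<Sum>k<?N \<omega>. r i (Y i k \<omega>)) = (\<lambda>v. \<Sum>k<?cnt v n i. r i (v i k)) (?T \<omega>)"
        using NT by simp
    qed
    from trunc_integral[OF ra fS this] show ?thesis by simp
  qed
  have iN: "integrable \<Omega> (\<lambda>\<omega>. real (?N \<omega>))"
  proof -
    have "\<forall>\<omega>\<in>space \<Omega>. real (?N \<omega>) = (\<lambda>v. real (?cnt v n i)) (?T \<omega>)" using NT by simp
    from trunc_integral[OF ra fS this] show ?thesis by simp
  qed
  have i0: "integrable \<Omega> (\<lambda>\<omega>. H (Y i 0 \<omega>))"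
  proof -
    have "\<forall>\<omega>\<in>space \<Omega>. H (Y i 0 \<omega>) = (\<lambda>v. H (v i 0)) (?T \<omega>)" using Tik by simp
    from trunc_integral[OF ra fS this] show ?thesis by simp
  qed
  have iNN: "integrable \<Omega> (\<lambda>\<omega>. H (Y i (?N \<omega>) \<omega>))"
  proof -
    have "\<forall>\<omega>\<in>space \<Omega>. H (Y i (?N \<omega>) \<omega>) = (\<lambda>v. H (v i (?cnt v n i))) (?T \<omega>)"
      using Tik Nle NT by metis
    from trunc_integral[OF ra fS this] show ?thesis by simp
  qed
  define Z where "Z = (\<lambda>k \<omega>. if k < ?N \<omega> then H (Y i (Suc k) \<omega>) - (\<Sum>y\<in>S i. P i (Y i k \<omega>) y * H y) else 0)"
  have iZ: "integrable \<Omega> (Z k) \<and> integral\<^sup>L \<Omega> (Z k) = 0" if "k < n" for k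
    unfolding Z_def using zero_term[OF ra fS i st that, where h=H and M=M and L=L and init=init and r=r] by simp
  have pw: "(\<Sum>k<?N \<omega>. r i (Y i k \<omega>)) - mu * real (?N \<omega>) =
      H (Y i 0 \<omega>) - H (Y i (?N \<omega>) \<omega>) + (\<Sum>k<n. Z k \<omega>)" if \<omega>: "\<omega> \<in> space \<Omega>" for \<omega>
  proof -
    let ?PH = "\<lambda>x. \<Sum>y\<in>S i. P i x y * H y"
    have "(\<Sum>k<?N \<omega>. r i (Y i k \<omega>)) - mu * real (?N \<omega>) = (\<Sum>k<?N \<omega>. r i (Y i k \<omega>) - mu)"
      by (simp add: sum_subtractf)
    also have "\<dots> = (\<Sum>k<?N \<omega>. H (Y i k \<omega>) - ?PH (Y i k \<omega>))"
      using pois YS[OF \<omega>] by (intro sum.cong) auto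
    also have "\<dots> = (\<Sum>k<?N \<omega>. H (Y i k \<omega>) - H (Y i (Suc k) \<omega>)) + (\<Sum>k<?N \<omega>. H (Y i (Suc k) \<omega>) - ?PH (Y i k \<omega>))"
      by (simp add: sum.distrib[symmetric])
    also have "(\<Sum>k<?N \<omega>. H (Y i k \<omega>) - H (Y i (Suc k) \<omega>)) = H (Y i 0 \<omega>) - H (Y i (?N \<omega>) \<omega>)"
      by (rule sum_lessThan_telescope')
    also have "(\<Sum>k<?N \<omega>. H (Y i (Suc k) \<omega>) - ?PH (Y i k \<omega>)) = (\<Sum>k<n. Z k \<omega>)"
    proof -
      have "(\<Sum>k<n. Z k \<omega>) = (\<Sum>k\<in>{..<n} \<inter> {k. k < ?N \<omega>}. H (Y i (Suc k) \<omega>) - ?PH (Y i k \<omega>))"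
        unfolding Z_def by (simp only: sum.inter_restrict finite_lessThan mem_Collect_eq)
      also have "{..<n} \<inter> {k. k < ?N \<omega>} = {..<?N \<omega>}" using Nle[of \<omega>] by auto
      finally show ?thesis by simp
    qed
    finally show ?thesis .
  qed
  have iSZ: "integrable \<Omega> (\<lambda>\<omega>. \<Sum>k<n. Z k \<omega>)" using iZ by (intro Bochner_Integration.integrable_sum) auto
  have ESZ: "integral\<^sup>L \<Omega> (\<lambda>\<omega>. \<Sum>k<n. Z k \<omega>) = 0"
    using iZ by (subst Bochner_Integration.integral_sum) auto
  have "integral\<^sup>L \<Omega> (\<lambda>\<omega>. (\<Sum>k<?N \<omega>. r i (Y i k \<omega>)) - mu * real (?N \<omega>)) =
        integral\<^sup>L \<Omega> (\<lambda>\<omega>. H (Y i 0 \<omega>) - H (Y i (?N \<omega>) \<omega>) + (\<Sum>k<n. Z k \<omega>))"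
    using pw by (intro Bochner_Integration.integral_cong) auto
  then have eq: "integral\<^sup>L \<Omega> (\<lambda>\<omega>. \<Sum>k<?N \<omega>. r i (Y i k \<omega>)) - mu * integral\<^sup>L \<Omega> (\<lambda>\<omega>. real (?N \<omega>)) =
       integral\<^sup>L \<Omega> (\<lambda>\<omega>. H (Y i 0 \<omega>)) - integral\<^sup>L \<Omega> (\<lambda>\<omega>. H (Y i (?N \<omega>) \<omega>))"
    using iR iN i0 iNN iSZ ESZ by simp
  have bnd: "\<bar>H x\<bar> \<le> B" if "x \<in> S i" for x
    unfolding B_def using fS i that by (intro member_le_sum) auto
  have b0: "\<bar>integral\<^sup>L \<Omega> (\<lambda>\<omega>. H (Y i 0 \<omega>))\<bar> \<le> B"
    using bnd YS by (intro bounded_exp[OF prob_space_axioms i0]) auto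
  have bN: "\<bar>integral\<^sup>L \<Omega> (\<lambda>\<omega>. H (Y i (?N \<omega>) \<omega>))\<bar> \<le> B"
    using bnd YS by (intro bounded_exp[OF prob_space_axioms iNN]) auto
  show ?thesis using iR iN eq b0 bN unfolding B_def by linarith
qed

theorem lemma4:
  fixes K M :: nat
    and S :: "nat \<Rightarrow> 's set"
    and P :: "nat \<Rightarrow> 's \<Rightarrow> 's \<Rightarrow> real"
    and r :: "nat \<Rightarrow> 's \<Rightarrow> real"
    and \<pi> :: "nat \<Rightarrow> 's \<Rightarrow> real"
  defines "\<mu> \<equiv> (\<lambda>i. mean_reward (S i) (r i) (\<pi> i))"
  assumes "1 \<le> M" and "M \<le> K"
    and "\<forall>i\<in>{1..K}. finite (S i) \<and> S i \<noteq> {}"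
    and "\<forall>i\<in>{1..K}. stochastic (S i) (P i)"
    and "\<forall>i\<in>{1..K}. irreducible (S i) (P i)"
    and "\<forall>i\<in>{1..K}. aperiodic (S i) (P i)"
    and "\<forall>i\<in>{1..K}. stationary (S i) (P i) (\<pi> i)"
    and "\<forall>i j. 1 \<le> i \<longrightarrow> i \<le> j \<longrightarrow> j \<le> K \<longrightarrow> \<mu> j \<le> \<mu> i"
    and "M < K \<longrightarrow> \<mu> (M + 1) < \<mu> M"
  shows "\<exists>C::real. \<forall>(L::real) init (\<Omega>::'a measure) Y.
           L > 0 \<longrightarrow> valid_init K M init \<longrightarrow> rested_arms \<Omega> K S P Y \<longrightarrow>
           (\<forall>n::nat.
              \<bar>(real n * (\<Sum>j\<in>{1..M}. \<mu> j)
                  - (\<integral>\<omega>. ucbm_total_reward K M L init r (\<lambda>i k. Y i k \<omega>) n \<partial>\<Omega>))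
               - (real n * (\<Sum>j\<in>{1..M}. \<mu> j)
                  - (\<Sum>i\<in>{1..K}. \<mu> i *
                       (\<integral>\<omega>. real (ucbm_count K M L init r (\<lambda>i k. Y i k \<omega>) n i) \<partial>\<Omega>)))\<bar>
              \<le> C)"
proof -
  have fS: "\<forall>j\<in>{1..K}. finite (S j)" using assms(4) by auto
  have "\<forall>i\<in>{1..K}. \<exists>H. \<forall>x\<in>S i. r i x - \<mu> i = H x - (\<Sum>y\<in>S i. P i x y * H y)"
  proof
    fix i assume i: "i \<in> {1..K}"
    have sta: "stationary (S i) (P i) (\<pi> i)" using assms(8) i by auto
    have "(\<Sum>x\<in>S i. \<pi> i x * (r i x - \<mu> i)) = (\<Sum>x\<in>S i. r i x * \<pi> i x) - \<mu> i * (\<Sum>x\<in>S i. \<pi> i x)"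
      by (simp add: algebra_simps sum_subtractf sum_distrib_left)
    also have "\<dots> = 0" using sta unfolding stationary_def \<mu>_def mean_reward_def by simp
    finally have f0: "(\<Sum>x\<in>S i. \<pi> i x * (r i x - \<mu> i)) = 0" .
    show "\<exists>H. \<forall>x\<in>S i. r i x - \<mu> i = H x - (\<Sum>y\<in>S i. P i x y * H y)"
      by (rule poisson[OF _ _ _ sta f0]) (use i assms(4,5,6) in auto)
  qed
  then obtain H where H: "\<forall>i\<in>{1..K}. \<forall>x\<in>S i. r i x - \<mu> i = H i x - (\<Sum>y\<in>S i. P i x y * H i y)"
    by (metis bchoice)
  define C where "C = (\<Sum>i\<in>{1..K}. 2 * (\<Sum>x\<in>S i. \<bar>H i x\<bar>))"
  show ?thesis
  proof (intro exI[of _ C] allI impI)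
    fix L :: real and init and \<Omega> :: "'a measure" and Y and n :: nat
    assume vi: "valid_init K M init" and ra: "rested_arms \<Omega> K S P Y"
    interpret prob_space \<Omega> using ra unfolding rested_arms_def by auto
    let ?R = "\<lambda>i \<omega>. \<Sum>k<ucbm_count K M L init r (\<lambda>j m. Y j m \<omega>) n i. r i (Y i k \<omega>)"
    let ?N = "\<lambda>i \<omega>. real (ucbm_count K M L init r (\<lambda>j m. Y j m \<omega>) n i)"
    have AB: "integrable \<Omega> (?R i) \<and> integrable \<Omega> (?N i)
       \<and> \<bar>integral\<^sup>L \<Omega> (?R i) - \<mu> i * integral\<^sup>L \<Omega> (?N i)\<bar> \<le> 2 * (\<Sum>x\<in>S i. \<bar>H i x\<bar>)"
      if i: "i \<in> {1..K}" for i
      using arm_bound[OF ra fS i _ , where mu="\<mu> i" and H="H i" and M=M and L=L and init=init and n=n] assms(5) H i by auto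
    have "(\<integral>\<omega>. ucbm_total_reward K M L init r (\<lambda>i k. Y i k \<omega>) n \<partial>\<Omega>) = (\<integral>\<omega>. (\<Sum>i\<in>{1..K}. ?R i \<omega>) \<partial>\<Omega>)"
      by (intro Bochner_Integration.integral_cong refl) (rule reward_eq[OF vi])
    also have "\<dots> = (\<Sum>i\<in>{1..K}. integral\<^sup>L \<Omega> (?R i))"
      using AB by (intro Bochner_Integration.integral_sum) auto
    finally have ER: "(\<integral>\<omega>. ucbm_total_reward K M L init r (\<lambda>i k. Y i k \<omega>) n \<partial>\<Omega>) = (\<Sum>i\<in>{1..K}. integral\<^sup>L \<Omega> (?R i))" .
    have "\<bar>(\<Sum>i\<in>{1..K}. integral\<^sup>L \<Omega> (?R i)) - (\<Sum>i\<in>{1..K}. \<mu> i * integral\<^sup>L \<Omega> (?N i))\<bar>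
        = \<bar>\<Sum>i\<in>{1..K}. integral\<^sup>L \<Omega> (?R i) - \<mu> i * integral\<^sup>L \<Omega> (?N i)\<bar>"
      by (simp add: sum_subtractf)
    also have "\<dots> \<le> (\<Sum>i\<in>{1..K}. \<bar>integral\<^sup>L \<Omega> (?R i) - \<mu> i * integral\<^sup>L \<Omega> (?N i)\<bar>)"
      by (rule sum_abs)
    also have "\<dots> \<le> C" unfolding C_def using AB by (intro sum_mono) auto
    finally have fin: "\<bar>(\<Sum>i\<in>{1..K}. integral\<^sup>L \<Omega> (?R i)) - (\<Sum>i\<in>{1..K}. \<mu> i * integral\<^sup>L \<Omega> (?N i))\<bar> \<le> C" .
    show "\<bar>(real n * (\<Sum>j\<in>{1..M}. \<mu> j)
                  - (\<integral>\<omega>. ucbm_total_reward K M L init r (\<lambda>i k. Y i k \<omega>) n \<partial>\<Omega>))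
               - (real n * (\<Sum>j\<in>{1..M}. \<mu> j)
                  - (\<Sum>i\<in>{1..K}. \<mu> i *
                       (\<integral>\<omega>. real (ucbm_count K M L init r (\<lambda>i k. Y i k \<omega>) n i) \<partial>\<Omega>)))\<bar>
              \<le> C"
      unfolding ER using fin by (simp add: abs_minus_commute)
  qed
qed

end
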